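(* Let $M,N\ge1$, $\gamma>0$ and let $\lambda_x,\lambda_v,\lambda_w$ be arbitrary positive constants. For arbitrary initial data, let $\{(\hat x_i(t),\hat v_i(t))\}_{i=1}^N$ be the solution of the centralized herding system \[ \frac{d\hat x_i}{dt}=\hat v_i,\qquad \frac{d\hat v_i}{dt}=\frac{\lambda_x}{N}\sum_{j=1}^N\hat\phi_{ij}(\hat x_j-\hat x_i)+\frac{\lambda_v}{N}\sum_{j=1}^N\hat\phi_{ij}(\hat v_j-\hat v_i)-\lambda_w\hat x_i,\qquad \hat\phi_{ij}=(1+|\hat x_i-\hat x_j|^2)^{-\gamma/2}, \] with $\sum_i\hat x_i(0)=\sum_i\hat v_i(0)=0$. Then $\mathcal{E}_2(t)\to0$ as $t\to\infty$.
   Context: $|\cdot|$ is the Euclidean norm on $\mathbb{R}^M$. The centralized variables are $\hat x_i=x_i-x_c$, $\hat v_i=v_i-v_c$, the deviations from the averages $x_c=\frac1N\sum_ix_i$, $v_c=\frac1N\sum_iv_i$ of a solution $(x_i,v_i)$ of the original herding model (with arbitrary initial data $x_i(0),v_i(0)$); their sums vanish for all time. Let $X=\sum_i|\hat x_i|^2$, $V=\sum_i|\hat v_i|^2$, and \[ S_\gamma=\begin{cases}\frac1N\sum_{i,j}\big\{(1+|\hat x_i-\hat x_j|^2)^{-(\gamma-2)/2}-1\big\}, & 0<\gamma<2,\\ \frac1N\sum_{i,j}\log(1+|\hat x_i-\hat x_j|^2), & \gamma=2,\\ \frac1N\sum_{i,j}\big\{1-(1+|\hat x_i-\hat x_j|^2)^{-(\gamma-2)/2}\big\},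 & \gamma>2,\end{cases} \qquad \beta_\gamma=\begin{cases}2-\gamma,&0<\gamma<2,\\2,&\gamma=2,\\\gamma-2,&\gamma>2.\end{cases} \] The herding energy is $\mathcal{E}_2(t)=\lambda_wX(t)+V(t)+\lambda_x\beta_\gamma^{-1}S_\gamma(t)$. *)

theory Defs
  imports "HOL-Analysis.Analysis"
begin

text \<open>Agents are indexed by i in {..<N}; positions/velocities live in real^'m (M = CARD('m)).\<close>

definition phi_hat :: "real \<Rightarrow> real^'m \<Rightarrow> real^'m \<Rightarrow> real" where
  "phi_hat \<gamma> xi xj = (1 + (norm (xi - xj))\<^sup>2) powr (-(\<gamma> / 2))"

definition beta_gamma :: "real \<Rightarrow> real" where
  "beta_gamma \<gamma> = (if \<gamma> < 2 then 2 - \<gamma> else if \<gamma> = 2 then 2 else \<gamma> - 2)"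

definition S_gamma :: "real \<Rightarrow> nat \<Rightarrow> (nat \<Rightarrow> real^'m) \<Rightarrow> real" where
  "S_gamma \<gamma> N x =
     (if \<gamma> < 2 then (1 / real N) * (\<Sum>i<N. \<Sum>j<N.
          (1 + (norm (x i - x j))\<^sup>2) powr (-(\<gamma> - 2) / 2) - 1)
      else if \<gamma> = 2 then (1 / real N) * (\<Sum>i<N. \<Sum>j<N. ln (1 + (norm (x i - x j))\<^sup>2))
      else (1 / real N) * (\<Sum>i<N. \<Sum>j<N.
          1 - (1 + (norm (x i - x j))\<^sup>2) powr (-(\<gamma> - 2) / 2)))"

definition X_of :: "nat \<Rightarrow> (nat \<Rightarrow> real^'m) \<Rightarrow> real" where
  "X_of N x = (\<Sum>i<N. (norm (x i))\<^sup>2)"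

definition herding_energy ::
  "real \<Rightarrow> real \<Rightarrow> real \<Rightarrow> nat \<Rightarrow> (nat \<Rightarrow> real^'m) \<Rightarrow> (nat \<Rightarrow> real^'m) \<Rightarrow> real" where
  "herding_energy lw lx \<gamma> N x v =
     lw * X_of N x + X_of N v + lx / beta_gamma \<gamma> * S_gamma \<gamma> N x"

end

theory Submission
  imports Defs
begin

definition Gf :: "real \<Rightarrow> real \<Rightarrow> real" where
"Gf g u = (if g < 2 then ((1+u) powr ((2-g)/2) - 1)/(2-g) else if g = 2 then ln(1+u)/2
   else (1 - (1+u) powr (-(g-2)/2))/(g-2))"

lemma Gf_deriv:
  assumes "u > -1"
  shows "(Gf g has_real_derivative (1+u) powr (-(g/2)) / 2) (at u)"
proof -
  have p: "1 + u > 0" using assms by simp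
  consider "g < 2" | "g = 2" | "g > 2" by linarith
  then show ?thesis
  proof cases
    case 1
    have e: "Gf g = (\<lambda>u. ((1+u) powr ((2-g)/2) - 1)/(2-g))" using 1 by (auto simp: Gf_def fun_eq_iff)
    have "((\<lambda>u. ((1+u) powr ((2-g)/2) - 1)/(2-g)) has_real_derivative
       ((2-g)/2 * (1+u) powr ((2-g)/2 - 1) * 1) / (2-g)) (at u)"
      using p 1 by (auto intro!: derivative_eq_intros)
    moreover have "((2-g)/2 * (1+u) powr ((2-g)/2 - 1) * 1) / (2-g) = (1+u) powr (-(g/2)) / 2"
      using 1 by (simp add: field_simps)
    ultimately show ?thesis unfolding e by metis
  next
    case 2
    have e: "Gf g = (\<lambda>u. ln(1+u)/2)" using 2 by (auto simp: Gf_def fun_eq_iff)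
    have "((\<lambda>u. ln(1+u)/2) has_real_derivative (1 / (1+u))/2) (at u)"
      using p by (auto intro!: derivative_eq_intros simp: field_simps)
    moreover have "1/(1+u) = (1+u) powr (-(g/2))" using 2 p by (simp add: powr_minus_divide)
    ultimately show ?thesis unfolding e by metis
  next
    case 3
    have e: "Gf g = (\<lambda>u. (1 - (1+u) powr (-(g-2)/2))/(g-2))" using 3 by (auto simp: Gf_def fun_eq_iff)
    have "((\<lambda>u. (1 - (1+u) powr (-(g-2)/2))/(g-2)) has_real_derivative
       (0 - (-(g-2)/2) * (1+u) powr (-(g-2)/2 - 1) * 1) / (g-2)) (at u)"
      using p 3 by (auto intro!: derivative_eq_intros)
    moreover have "(0 - (-(g-2)/2) * (1+u) powr (-(g-2)/2 - 1) * 1) / (g-2) = (1+u) powr (-(g/2)) / 2"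
      using 3 by (simp add: field_simps)
    ultimately show ?thesis unfolding e by metis
  qed
qed

lemma Gf0: "Gf g 0 = 0" by (simp add: Gf_def)

lemma Gf_bounds:
  assumes "g > 0" "u \<ge> 0"
  shows "0 \<le> Gf g u" "Gf g u \<le> u / 2"
proof -
  have "Gf g 0 \<le> Gf g u"
  proof (rule DERIV_nonneg_imp_nondecreasing[OF assms(2)])
    fix y assume y: "0 \<le> y" "y \<le> u"
    have "(Gf g has_real_derivative (1+y) powr (-(g/2)) / 2) (at y)"
      using Gf_deriv[of y g] y by simp
    then show "\<exists>d. (Gf g has_real_derivative d) (at y) \<and> d \<ge> 0"
      by (intro exI[of _ "(1+y) powr (-(g/2)) / 2"]) auto
  qed
  then show "0 \<le> Gf g u" by (simp add: Gf0)
  have "(\<lambda>u. u/2 - Gf g u) 0 \<le> (\<lambda>u. u/2 - Gf g u) u"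
  proof (rule DERIV_nonneg_imp_nondecreasing[OF assms(2)])
    fix y assume y: "0 \<le> y" "y \<le> u"
    have "((\<lambda>u. u/2 - Gf g u) has_real_derivative 1/2 - (1+y) powr (-(g/2)) / 2) (at y)"
      using Gf_deriv[of y g] y by (auto intro!: derivative_eq_intros)
    moreover have "(1+y) powr (-(g/2)) \<le> 1"
      using y assms(1) ge_one_powr_ge_zero[of "1+y" "g/2"]
      by (simp add: powr_minus_divide)
    ultimately show "\<exists>d. ((\<lambda>u. u/2 - Gf g u) has_real_derivative d) (at y) \<and> d \<ge> 0"
      by (intro exI[of _ "1/2 - (1+y) powr (-(g/2)) / 2"]) auto
  qed
  then show "Gf g u \<le> u / 2" by (simp add: Gf0)
qed

lemma sym_sum:
  fixes c :: "nat \<Rightarrow> nat \<Rightarrow> real" and y w :: "nat \<Rightarrow> 'a::real_inner"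
  assumes "\<And>i j. c i j = c j i"
  shows "(\<Sum>i<N. \<Sum>j<N. c i j * ((y j - y i) \<bullet> w i))
       = -(1/2) * (\<Sum>i<N. \<Sum>j<N. c i j * ((y j - y i) \<bullet> (w j - w i)))"
proof -
  let ?A = "(\<Sum>i<N. \<Sum>j<N. c i j * ((y j - y i) \<bullet> w i))"
  have "?A = (\<Sum>i<N. \<Sum>j<N. c j i * ((y i - y j) \<bullet> w j))"
    by (rule sum.swap)
  also have "\<dots> = (\<Sum>i<N. \<Sum>j<N. - (c i j * ((y j - y i) \<bullet> w j)))"
    by (intro sum.cong refl) (metis assms inner_minus_left minus_diff_eq mult_minus_right)
  finally have "?A + ?A = (\<Sum>i<N. \<Sum>j<N. c i j * ((y j - y i) \<bullet> w i) - c i j * ((y j - y i) \<bullet> w j))"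
    by (simp add: sum_subtractf sum_negf)
  also have "\<dots> = - (\<Sum>i<N. \<Sum>j<N. c i j * ((y j - y i) \<bullet> (w j - w i)))"
    by (simp add: sum_negf[symmetric] inner_diff_right algebra_simps)
  finally show ?thesis by simp
qed

lemma sym_sum_vec:
  fixes c :: "nat \<Rightarrow> nat \<Rightarrow> real" and y :: "nat \<Rightarrow> 'a::real_vector"
  assumes "\<And>i j. c i j = c j i"
  shows "(\<Sum>i<N. \<Sum>j<N. c i j *\<^sub>R (y j - y i)) = 0"
proof -
  let ?A = "(\<Sum>i<N. \<Sum>j<N. c i j *\<^sub>R (y j - y i))"
  have "?A = (\<Sum>i<N. \<Sum>j<N. c j i *\<^sub>R (y i - y j))"
    by (rule sum.swap)
  also have "\<dots> = (\<Sum>i<N. \<Sum>j<N. - (c i j *\<^sub>R (y j - y i)))"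
    by (intro sum.cong refl) (metis assms minus_diff_eq scaleR_minus_right)
  also have "\<dots> = - ?A" by (simp add: sum_negf)
  finally have h: "?A = - ?A" .
  have "?A + ?A = 0" using h eq_neg_iff_add_eq_0 by blast
  then have "(2::real) *\<^sub>R ?A = 0" by (simp add: scaleR_2)
  then show ?thesis by simp
qed

lemma antimono_within:
  fixes f f' :: "real \<Rightarrow> real"
  assumes d: "\<And>t. t \<ge> 0 \<Longrightarrow> (f has_real_derivative f' t) (at t within {0..})"
    and n: "\<And>t. t \<ge> 0 \<Longrightarrow> f' t \<le> 0" and "0 \<le> s" "s \<le> t"
  shows "f t \<le> f s"
proof (cases "s = t")
  case False
  then have st: "s < t" using assms by simp
  have "\<exists>z\<in>{s<..<t}. f t - f s = (\<lambda>h. f' z * h) (t - s)"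
  proof (rule mvt_simple[OF st])
    fix z assume z: "s \<le> z" "z \<le> t"
    have "(f has_real_derivative f' z) (at z within {s..t})"
      by (rule DERIV_subset[OF d]) (use z assms(3) in auto)
    then show "(f has_derivative (\<lambda>h. f' z * h)) (at z within {s..t})"
      by (simp add: has_field_derivative_def)
  qed
  then obtain z where z: "z \<in> {s<..<t}" "f t - f s = (t - s) * f' z" by (auto simp: mult.commute)
  have "(t - s) * f' z \<le> 0" using n[of z] z(1) assms(3) st
    by (simp add: mult_nonneg_nonpos)
  then show ?thesis using z by simp
qed simp

lemma dnorm2:
  fixes f :: "real \<Rightarrow> 'a::real_inner"
  assumes "(f has_vector_derivative f') (at t within S)"
  shows "((\<lambda>s. (norm (f s))\<^sup>2) has_real_derivative 2 * (f t \<bullet> f')) (at t within S)"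
proof -
  have "((\<lambda>s. f s \<bullet> f s) has_vector_derivative (f t \<bullet> f' + f' \<bullet> f t)) (at t within S)"
    by (rule bounded_bilinear.has_vector_derivative[OF bounded_bilinear_inner assms assms])
  then show ?thesis
    by (simp add: power2_norm_eq_inner has_real_derivative_iff_has_vector_derivative inner_commute)
qed

lemma dinner:
  fixes f g :: "real \<Rightarrow> 'a::real_inner"
  assumes "(f has_vector_derivative f') (at t within S)" "(g has_vector_derivative g') (at t within S)"
  shows "((\<lambda>s. f s \<bullet> g s) has_real_derivative (f t \<bullet> g' + f' \<bullet> g t)) (at t within S)"
  using bounded_bilinear.has_vector_derivative[OF bounded_bilinear_inner assms]
  by (simp add: has_real_derivative_iff_has_vector_derivative)

lemma inner_swap_diff: "((a::'a::real_inner) - b) \<bullet> (c - d) = (b - a) \<bullet> (d - c)"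
  by (metis inner_minus_left inner_minus_right minus_diff_eq minus_minus)

locale herd =
  fixes N :: nat and \<gamma> lx lv lw :: real
    and x v :: "real \<Rightarrow> nat \<Rightarrow> real^'m"
  assumes N1: "N \<ge> 1" and gpos: "\<gamma> > 0" and lxp: "lx > 0" and lvp: "lv > 0" and lwp: "lw > 0"
    and dx: "\<And>t i. t \<ge> 0 \<Longrightarrow> i < N \<Longrightarrow>
              ((\<lambda>s. x s i) has_vector_derivative v t i) (at t within {0..})"
    and dv: "\<And>t i. t \<ge> 0 \<Longrightarrow> i < N \<Longrightarrow>
              ((\<lambda>s. v s i) has_vector_derivative
                 ((lx / real N) *\<^sub>R (\<Sum>j<N. phi_hat \<gamma> (x t i) (x t j) *\<^sub>R (x t j - x t i))
                + (lv / real N) *\<^sub>R (\<Sum>j<N. phi_hat \<gamma> (x t i) (x t j) *\<^sub>R (v t j - v t i))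
                - lw *\<^sub>R x t i)) (at t within {0..})"
    and x0: "(\<Sum>i<N. x 0 i) = 0" and v0: "(\<Sum>i<N. v 0 i) = 0"
begin

definition "ph t i j = phi_hat \<gamma> (x t i) (x t j)"
definition "acc t i = (lx / real N) *\<^sub>R (\<Sum>j<N. ph t i j *\<^sub>R (x t j - x t i))
                + (lv / real N) *\<^sub>R (\<Sum>j<N. ph t i j *\<^sub>R (v t j - v t i))
                - lw *\<^sub>R x t i"
definition "Ds t = (\<Sum>i<N. \<Sum>j<N. ph t i j * (norm (v t j - v t i))\<^sup>2)"
definition "Qs t = (\<Sum>i<N. \<Sum>j<N. ph t i j * (norm (x t j - x t i))\<^sup>2)"
definition "Sterm t = lx / real N * (\<Sum>i<N. \<Sum>j<N. Gf \<gamma> ((norm (x t i - x t j))\<^sup>2))"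
definition "EE t = herding_energy lw lx \<gamma> N (x t) (v t)"

lemma dv': "t \<ge> 0 \<Longrightarrow> i < N \<Longrightarrow> ((\<lambda>s. v s i) has_vector_derivative acc t i) (at t within {0..})"
  using dv unfolding acc_def ph_def by blast

lemma ph_sym: "ph t i j = ph t j i"
  by (simp add: ph_def phi_hat_def norm_minus_commute)

lemma ph_pos: "ph t i j > 0"
  by (simp add: ph_def phi_hat_def) (smt (verit) zero_le_power2)

lemma ph_eq: "ph t i j = (1 + (norm (x t i - x t j))\<^sup>2) powr (-(\<gamma>/2))"
  by (simp add: ph_def phi_hat_def)

lemma Nr: "real N > 0" using N1 by simp

lemma EE_eq: "EE t = lw * X_of N (x t) + X_of N (v t) + Sterm t"
proof -
  let ?u = "\<lambda>i j. (norm (x t i - x t j))\<^sup>2"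
  consider "\<gamma> < 2" | "\<gamma> = 2" | "\<gamma> > 2" by linarith
  then show ?thesis
  proof cases
    case 1
    have "(\<Sum>i<N. \<Sum>j<N. Gf \<gamma> (?u i j)) = (\<Sum>i<N. \<Sum>j<N. (1 + ?u i j) powr (-(\<gamma> - 2) / 2) - 1) / (2 - \<gamma>)"
      using 1 by (simp add: Gf_def sum_divide_distrib minus_diff_eq)
    then show ?thesis using Nr 1
      by (simp add: EE_def herding_energy_def S_gamma_def beta_gamma_def Sterm_def)
  next
    case 2
    have "(\<Sum>i<N. \<Sum>j<N. ln (1 + ?u i j)) = 2 * (\<Sum>i<N. \<Sum>j<N. Gf \<gamma> (?u i j))"
      using 2 by (simp add: Gf_def sum_distrib_left)
    then show ?thesis unfolding EE_def herding_energy_def S_gamma_def beta_gamma_def Sterm_def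
      using Nr 2 by simp
  next
    case 3
    have "(\<Sum>i<N. \<Sum>j<N. Gf \<gamma> (?u i j)) = (\<Sum>i<N. \<Sum>j<N. 1 - (1 + ?u i j) powr (-(\<gamma> - 2) / 2)) / (\<gamma> - 2)"
      using 3 by (simp add: Gf_def sum_divide_distrib)
    then show ?thesis using Nr 3
      by (simp add: EE_def herding_energy_def S_gamma_def beta_gamma_def Sterm_def)
  qed
qed

lemma Sterm_nonneg: "Sterm t \<ge> 0"
  unfolding Sterm_def using lxp Nr Gf_bounds(1)[OF gpos]
  by (intro mult_nonneg_nonneg sum_nonneg) auto

lemma X_nonneg: "X_of N y \<ge> 0"
  by (simp add: X_of_def sum_nonneg)

lemma dSterm:
  assumes "t \<ge> 0"
  shows "(Sterm has_real_derivative lx / real N * (\<Sum>i<N. \<Sum>j<N. ph t i j * ((x t i - x t j) \<bullet> (v t i - v t j))))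
    (at t within {0..})"
  unfolding Sterm_def
proof (intro DERIV_cmult DERIV_sum)
  fix i j assume ij: "i \<in> {..<N}" "j \<in> {..<N}"
  have d: "((\<lambda>s. x s i - x s j) has_vector_derivative (v t i - v t j)) (at t within {0..})"
    using dx[OF assms] ij by (auto intro!: derivative_intros)
  have "((\<lambda>s. Gf \<gamma> ((norm (x s i - x s j))\<^sup>2)) has_real_derivative
     (1 + (norm (x t i - x t j))\<^sup>2) powr (-(\<gamma>/2)) / 2 * (2 * ((x t i - x t j) \<bullet> (v t i - v t j))))
     (at t within {0..})"
    by (rule DERIV_chain2[OF Gf_deriv dnorm2[OF d]]) (smt (verit) zero_le_power2)
  then show "((\<lambda>s. Gf \<gamma> ((norm (x s i - x s j))\<^sup>2)) has_real_derivative
     ph t i j * ((x t i - x t j) \<bullet> (v t i - v t j))) (at t within {0..})"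
    by (simp add: ph_eq)
qed

lemma sum_v_acc: "(\<Sum>i<N. v t i \<bullet> acc t i) =
   lx / real N * (\<Sum>i<N. \<Sum>j<N. ph t i j * ((x t j - x t i) \<bullet> v t i))
 + lv / real N * (\<Sum>i<N. \<Sum>j<N. ph t i j * ((v t j - v t i) \<bullet> v t i))
 - lw * (\<Sum>i<N. x t i \<bullet> v t i)"
  by (simp add: acc_def inner_add_right inner_diff_right inner_sum_right sum.distrib sum_subtractf
      sum_distrib_left inner_commute)

lemma dEE:
  assumes "t \<ge> 0"
  shows "(EE has_real_derivative - (lv / real N * Ds t)) (at t within {0..})"
proof -
  have d1: "((\<lambda>s. lw * X_of N (x s) + X_of N (v s) + Sterm s) has_real_derivative
     lw * (\<Sum>i<N. 2 * (x t i \<bullet> v t i)) + (\<Sum>i<N. 2 * (v t i \<bullet> acc t i))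
     + lx / real N * (\<Sum>i<N. \<Sum>j<N. ph t i j * ((x t i - x t j) \<bullet> (v t i - v t j))))
    (at t within {0..})"
    unfolding X_of_def
    by (intro DERIV_add DERIV_cmult DERIV_sum dSterm[OF assms] dnorm2 dx[OF assms] dv'[OF assms]) auto
  let ?A = "(\<Sum>i<N. \<Sum>j<N. ph t i j * ((x t j - x t i) \<bullet> (v t j - v t i)))"
  let ?B = "(\<Sum>i<N. \<Sum>j<N. ph t i j * ((v t j - v t i) \<bullet> (v t j - v t i)))"
  let ?C = "(\<Sum>i<N. x t i \<bullet> v t i)"
  have a1: "(\<Sum>i<N. \<Sum>j<N. ph t i j * ((x t j - x t i) \<bullet> v t i)) = -(1/2) * ?A"
    by (rule sym_sum) (rule ph_sym)
  have a2: "(\<Sum>i<N. \<Sum>j<N. ph t i j * ((v t j - v t i) \<bullet> v t i)) = -(1/2) * ?B"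
    by (rule sym_sum) (rule ph_sym)
  have a3: "(\<Sum>i<N. \<Sum>j<N. ph t i j * ((x t i - x t j) \<bullet> (v t i - v t j))) = ?A"
    by (simp add: inner_swap_diff[of "x t i" "x t j" for i j])
  have a4: "?B = Ds t" by (simp add: Ds_def power2_norm_eq_inner)
  have "lw * (\<Sum>i<N. 2 * (x t i \<bullet> v t i)) + (\<Sum>i<N. 2 * (v t i \<bullet> acc t i))
     + lx / real N * (\<Sum>i<N. \<Sum>j<N. ph t i j * ((x t i - x t j) \<bullet> (v t i - v t j)))
     = - (lv / real N * Ds t)"
    unfolding a3 sum_distrib_left[symmetric] sum_v_acc a1 a2 a4[symmetric]
    by (simp add: algebra_simps)
  with d1 show ?thesis unfolding EE_eq[abs_def] by simp
qed

end

context herd begin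

lemma sum_acc: "(\<Sum>i<N. acc t i) = - lw *\<^sub>R (\<Sum>i<N. x t i)"
proof -
  have z1: "(\<Sum>i<N. \<Sum>j<N. ph t i j *\<^sub>R (x t j - x t i)) = 0" by (rule sym_sum_vec) (rule ph_sym)
  have z2: "(\<Sum>i<N. \<Sum>j<N. ph t i j *\<^sub>R (v t j - v t i)) = 0" by (rule sym_sum_vec) (rule ph_sym)
  show ?thesis
    by (simp add: acc_def sum.distrib sum_subtractf scaleR_sum_right[symmetric] z1 z2)
qed

definition "H t = lw * (norm (\<Sum>i<N. x t i))\<^sup>2 + (norm (\<Sum>i<N. v t i))\<^sup>2"

lemma dH: assumes "t \<ge> 0" shows "(H has_real_derivative 0) (at t within {0..})"
proof -
  have "(H has_real_derivative lw * (2 * ((\<Sum>i<N. x t i) \<bullet> (\<Sum>i<N. v t i)))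
       + 2 * ((\<Sum>i<N. v t i) \<bullet> (\<Sum>i<N. acc t i))) (at t within {0..})"
    unfolding H_def[abs_def]
    by (intro DERIV_add DERIV_cmult dnorm2 has_vector_derivative_sum dx[OF assms] dv'[OF assms]) auto
  then show ?thesis by (simp add: sum_acc inner_commute)
qed

lemma sums_zero:
  assumes "t \<ge> 0"
  shows "(\<Sum>i<N. x t i) = 0" "(\<Sum>i<N. v t i) = 0"
proof -
  have "H t \<le> H 0"
    by (rule antimono_within[OF dH]) (use assms in auto)
  moreover have "H 0 = 0" by (simp add: H_def x0 v0)
  ultimately have h: "H t \<le> 0" by simp
  have "lw * (norm (\<Sum>i<N. x t i))\<^sup>2 \<ge> 0" using lwp by simp
  then have "(norm (\<Sum>i<N. v t i))\<^sup>2 = 0" "lw * (norm (\<Sum>i<N. x t i))\<^sup>2 = 0"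
    using h unfolding H_def by (smt (verit) zero_le_power2)+
  then show "(\<Sum>i<N. x t i) = 0" "(\<Sum>i<N. v t i) = 0" using lwp by auto
qed

lemma EE_mono: assumes "t \<ge> 0" shows "EE t \<le> EE 0"
proof (rule antimono_within[OF dEE])
  fix s :: real
  have "Ds s \<ge> 0" unfolding Ds_def using ph_pos
    by (intro sum_nonneg mult_nonneg_nonneg) (auto intro: less_imp_le)
  then show "- (lv / real N * Ds s) \<le> 0" using lvp Nr by simp
qed (use assms in auto)

definition "R = 4 * EE 0 / lw"
definition "m = (1 + R) powr (-(\<gamma>/2))"

lemma EE_ge: "EE t \<ge> lw * X_of N (x t) + X_of N (v t)"
  using EE_eq Sterm_nonneg by simp

lemma R_nonneg: "R \<ge> 0"
  using EE_ge[of 0] X_nonneg lwp unfolding R_def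
  by (smt (verit) divide_nonneg_pos mult_nonneg_nonneg)

lemma m_pos: "m > 0" using R_nonneg by (simp add: m_def)

lemma m_le1: "m \<le> 1"
  unfolding m_def using R_nonneg gpos ge_one_powr_ge_zero[of "1+R" "\<gamma>/2"]
  by (simp add: powr_minus_divide)

lemma u_bound:
  assumes "t \<ge> 0" "i < N" "j < N"
  shows "(norm (x t i - x t j))\<^sup>2 \<le> R"
proof -
  have xi: "(norm (x t k))\<^sup>2 \<le> X_of N (x t)" if "k < N" for k
    unfolding X_of_def using that by (intro member_le_sum) auto
  have "lw * X_of N (x t) \<le> EE 0" using EE_ge[of t] EE_mono[OF assms(1)] X_nonneg[of "v t"] by simp
  then have X: "X_of N (x t) \<le> EE 0 / lw" using lwp by (simp add: field_simps)
  have "norm (x t i - x t j) \<le> norm (x t i) + norm (x t j)" by (rule norm_triangle_ineq4)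
  then have "(norm (x t i - x t j))\<^sup>2 \<le> (norm (x t i) + norm (x t j))\<^sup>2"
    by (simp add: power_mono)
  also have "\<dots> \<le> 2 * ((norm (x t i))\<^sup>2 + (norm (x t j))\<^sup>2)"
    by (smt (verit) zero_le_power2 power2_diff power2_sum)
  also have "\<dots> \<le> 4 * X_of N (x t)" using xi[OF assms(2)] xi[OF assms(3)] by simp
  also have "\<dots> \<le> R" using X unfolding R_def by (simp add: field_simps)
  finally show ?thesis .
qed

lemma ph_lower:
  assumes "t \<ge> 0" "i < N" "j < N"
  shows "ph t i j \<ge> m"
  unfolding ph_eq m_def
  by (rule powr_mono2') (use gpos u_bound[OF assms] in \<open>auto intro: add_pos_nonneg\<close>)

end

lemma cross_bound:
  fixes a b :: "'a::real_inner"
  assumes d: "\<delta> > 0"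
  shows "-(a \<bullet> b) \<le> (\<delta> * (norm b)\<^sup>2 + (norm a)\<^sup>2 / \<delta>) / 2"
proof -
  have "0 \<le> (\<delta> *\<^sub>R b + a) \<bullet> (\<delta> *\<^sub>R b + a)" by simp
  also have "\<dots> = \<delta>\<^sup>2 * (b \<bullet> b) + 2 * \<delta> * (a \<bullet> b) + (a \<bullet> a)"
    by (simp add: inner_add_left inner_add_right inner_commute[of b a] power2_eq_square algebra_simps)
  finally have h: "0 \<le> \<delta>\<^sup>2 * (norm b)\<^sup>2 + 2 * \<delta> * (a \<bullet> b) + (norm a)\<^sup>2"
    by (simp add: power2_norm_eq_inner)
  have "(\<delta> * (norm b)\<^sup>2 + (norm a)\<^sup>2 / \<delta>) / 2 + a \<bullet> b
      = (\<delta>\<^sup>2 * (norm b)\<^sup>2 + 2 * \<delta> * (a \<bullet> b) + (norm a)\<^sup>2) / (2 * \<delta>)"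
    using d by (simp add: field_simps power2_eq_square)
  also have "\<dots> \<ge> 0" using h d by simp
  finally show ?thesis by linarith
qed

lemma abs_inner_le: "\<bar>(a::'a::real_inner) \<bullet> b\<bar> \<le> ((norm a)\<^sup>2 + (norm b)\<^sup>2) / 2"
proof -
  have "\<bar>a \<bullet> b\<bar> \<le> norm a * norm b" by (rule Cauchy_Schwarz_ineq2)
  also have "\<dots> \<le> ((norm a)\<^sup>2 + (norm b)\<^sup>2) / 2"
  proof -
    have "0 \<le> (norm a - norm b)\<^sup>2" by simp
    then show ?thesis by (simp add: power2_diff field_simps)
  qed
  finally show ?thesis .
qed

context herd begin

lemma Vsum:
  assumes "t \<ge> 0"
  shows "(\<Sum>i<N. \<Sum>j<N. (norm (v t j - v t i))\<^sup>2) = 2 * real N * X_of N (v t)"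
proof -
  have p: "(norm (a - b))\<^sup>2 = (norm a)\<^sup>2 + (norm b)\<^sup>2 - 2 * (a \<bullet> b)" for a b :: "real^'m"
    by (simp add: power2_norm_eq_inner inner_diff_left inner_diff_right inner_commute)
  have z: "(\<Sum>j<N. v t j \<bullet> v t i) = 0" for i
    by (simp add: inner_sum_left[symmetric] sums_zero[OF assms])
  have "(\<Sum>i<N. \<Sum>j<N. (norm (v t j - v t i))\<^sup>2)
     = (\<Sum>i<N. \<Sum>j<N. (norm (v t j))\<^sup>2) + (\<Sum>i<N. \<Sum>j<N. (norm (v t i))\<^sup>2)
       - 2 * (\<Sum>i<N. \<Sum>j<N. v t j \<bullet> v t i)"
    by (simp add: p sum.distrib sum_subtractf sum_distrib_left)
  also have "\<dots> = 2 * real N * X_of N (v t)"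
    by (simp add: z X_of_def sum_distrib_left mult.assoc)
  finally show ?thesis .
qed

lemma Ds_lower:
  assumes "t \<ge> 0"
  shows "Ds t \<ge> 2 * real N * m * X_of N (v t)"
proof -
  have "m * (\<Sum>i<N. \<Sum>j<N. (norm (v t j - v t i))\<^sup>2) = (\<Sum>i<N. \<Sum>j<N. m * (norm (v t j - v t i))\<^sup>2)"
    by (simp add: sum_distrib_left)
  also have "\<dots> \<le> Ds t" unfolding Ds_def
    by (intro sum_mono mult_right_mono) (auto intro: ph_lower[OF assms])
  finally show ?thesis using Vsum[OF assms] by (simp add: algebra_simps)
qed

lemma Sterm_upper:
  assumes "t \<ge> 0"
  shows "Sterm t \<le> lx / (2 * real N * m) * Qs t"
proof -
  have "(\<Sum>i<N. \<Sum>j<N. Gf \<gamma> ((norm (x t i - x t j))\<^sup>2))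
     \<le> (\<Sum>i<N. \<Sum>j<N. ph t i j * (norm (x t j - x t i))\<^sup>2 / (2 * m))"
  proof (intro sum_mono)
    fix i j assume ij: "i \<in> {..<N}" "j \<in> {..<N}"
    let ?u = "(norm (x t i - x t j))\<^sup>2"
    have "Gf \<gamma> ?u \<le> ?u / 2" by (rule Gf_bounds(2)[OF gpos]) simp
    also have "\<dots> \<le> ph t i j * ?u / (2 * m)"
      using ph_lower[OF assms, of i j] ij m_pos
      by (simp add: field_simps mult_right_mono)
    finally show "Gf \<gamma> ?u \<le> ph t i j * (norm (x t j - x t i))\<^sup>2 / (2 * m)"
      by (simp add: norm_minus_commute)
  qed
  also have "\<dots> = Qs t / (2 * m)"
    by (simp add: Qs_def sum_divide_distrib)
  finally have "(\<Sum>i<N. \<Sum>j<N. Gf \<gamma> ((norm (x t i - x t j))\<^sup>2)) \<le> Qs t / (2 * m)" .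
  then have "lx / real N * (\<Sum>i<N. \<Sum>j<N. Gf \<gamma> ((norm (x t i - x t j))\<^sup>2)) \<le> lx / real N * (Qs t / (2 * m))"
    using lxp Nr by (intro mult_left_mono) auto
  then show ?thesis unfolding Sterm_def by (simp add: field_simps)
qed

definition "P t = (\<Sum>i<N. x t i \<bullet> v t i)"

lemma dP:
  assumes "t \<ge> 0"
  shows "(P has_real_derivative (\<Sum>i<N. x t i \<bullet> acc t i + v t i \<bullet> v t i)) (at t within {0..})"
  unfolding P_def[abs_def]
  by (intro DERIV_sum dinner dx[OF assms] dv'[OF assms]) auto

lemma Qs_nonneg: "Qs t \<ge> 0"
  unfolding Qs_def using ph_pos by (intro sum_nonneg mult_nonneg_nonneg) (auto intro: less_imp_le)

lemma Ds_nonneg: "Ds t \<ge> 0"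
  unfolding Ds_def using ph_pos by (intro sum_nonneg mult_nonneg_nonneg) (auto intro: less_imp_le)

lemma dP_bound:
  assumes "t \<ge> 0"
  shows "(\<Sum>i<N. x t i \<bullet> acc t i + v t i \<bullet> v t i) \<le>
     X_of N (v t) - lx / (4 * real N) * Qs t + lv\<^sup>2 / (4 * lx * real N) * Ds t - lw * X_of N (x t)"
proof -
  have e1: "(\<Sum>i<N. x t i \<bullet> acc t i) =
   lx / real N * (\<Sum>i<N. \<Sum>j<N. ph t i j * ((x t j - x t i) \<bullet> x t i))
 + lv / real N * (\<Sum>i<N. \<Sum>j<N. ph t i j * ((v t j - v t i) \<bullet> x t i))
 - lw * (\<Sum>i<N. x t i \<bullet> x t i)"
  proof -
    have "x t i \<bullet> acc t i = lx / real N * (\<Sum>j<N. ph t i j * (x t i \<bullet> (x t j - x t i)))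
      + lv / real N * (\<Sum>j<N. ph t i j * (x t i \<bullet> (v t j - v t i))) - lw * (x t i \<bullet> x t i)" for i
      by (simp add: acc_def inner_add_right inner_diff_right inner_sum_right)
    moreover have "x t i \<bullet> (x t j - x t i) = (x t j - x t i) \<bullet> x t i"
       "x t i \<bullet> (v t j - v t i) = (v t j - v t i) \<bullet> x t i" for i j
      by (rule inner_commute)+
    ultimately have "x t i \<bullet> acc t i = lx / real N * (\<Sum>j<N. ph t i j * ((x t j - x t i) \<bullet> x t i))
      + lv / real N * (\<Sum>j<N. ph t i j * ((v t j - v t i) \<bullet> x t i)) - lw * (x t i \<bullet> x t i)" for i
      by presburger
    then show ?thesis by (simp add: sum.distrib sum_subtractf sum_distrib_left)
  qed
  have a1: "(\<Sum>i<N. \<Sum>j<N. ph t i j * ((x t j - x t i) \<bullet> x t i)) = -(1/2) * Qs t"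
    unfolding sym_sum[of "ph t", OF ph_sym] Qs_def by (simp add: power2_norm_eq_inner)
  have a2: "(\<Sum>i<N. \<Sum>j<N. ph t i j * ((v t j - v t i) \<bullet> x t i))
     = -(1/2) * (\<Sum>i<N. \<Sum>j<N. ph t i j * ((v t j - v t i) \<bullet> (x t j - x t i)))"
    by (rule sym_sum) (rule ph_sym)
  define \<delta> where "\<delta> = lx / lv"
  have dp: "\<delta> > 0" using lxp lvp by (simp add: \<delta>_def)
  have a3: "-(1/2) * (\<Sum>i<N. \<Sum>j<N. ph t i j * ((v t j - v t i) \<bullet> (x t j - x t i)))
     \<le> (\<delta> * Qs t + Ds t / \<delta>) / 4"
  proof -
    have "-(1/2) * (\<Sum>i<N. \<Sum>j<N. ph t i j * ((v t j - v t i) \<bullet> (x t j - x t i)))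
       = (\<Sum>i<N. \<Sum>j<N. ph t i j * (-((v t j - v t i) \<bullet> (x t j - x t i)))) / 2"
      by (simp add: sum_negf)
    also have "\<dots> \<le> (\<Sum>i<N. \<Sum>j<N. ph t i j * ((\<delta> * (norm (x t j - x t i))\<^sup>2 + (norm (v t j - v t i))\<^sup>2 / \<delta>) / 2)) / 2"
      by (intro divide_right_mono sum_mono mult_left_mono cross_bound dp) (auto intro: less_imp_le ph_pos)
    also have "\<dots> = (\<delta> * Qs t + Ds t / \<delta>) / 4"
      by (simp add: Qs_def Ds_def sum_divide_distrib sum_distrib_left sum.distrib
          algebra_simps add_divide_distrib)
    finally show ?thesis .
  qed
  have xx: "(\<Sum>i<N. x t i \<bullet> x t i) = X_of N (x t)" by (simp add: X_of_def power2_norm_eq_inner)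
  have vv: "(\<Sum>i<N. v t i \<bullet> v t i) = X_of N (v t)" by (simp add: X_of_def power2_norm_eq_inner)
  have fin2: "\<And>S Cr Qa Qb V X A B :: real. Cr \<le> A \<Longrightarrow> S = Qa + Cr - X + V \<Longrightarrow>
      Qa = -(2*Qb) \<Longrightarrow> A = Qb + B \<Longrightarrow> S \<le> V - Qb + B - X" by linarith
  have c: "lv / real N * ((\<delta> * Qs t + Ds t / \<delta>) / 4) = lx / (4 * real N) * Qs t + lv\<^sup>2 / (4 * lx * real N) * Ds t"
    using lxp lvp Nr by (simp add: \<delta>_def field_simps power2_eq_square)
  have "lv / real N * (-(1/2) * (\<Sum>i<N. \<Sum>j<N. ph t i j * ((v t j - v t i) \<bullet> (x t j - x t i))))
     \<le> lv / real N * ((\<delta> * Qs t + Ds t / \<delta>) / 4)"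
    using a3 lvp Nr by (intro mult_left_mono) auto
  moreover have "(\<Sum>i<N. x t i \<bullet> acc t i + v t i \<bullet> v t i) =
     lx / real N * (-(1/2) * Qs t)
   + lv / real N * (-(1/2) * (\<Sum>i<N. \<Sum>j<N. ph t i j * ((v t j - v t i) \<bullet> (x t j - x t i))))
   - lw * X_of N (x t) + X_of N (v t)"
    by (simp only: sum.distrib e1 a1 a2 xx vv)
  moreover have "lx / real N * (-(1/2) * Qs t) = -(2 * (lx / (4 * real N) * Qs t))"
    using Nr by (simp add: field_simps)
  ultimately show ?thesis using c by (rule fin2)
qed


definition "eps = min (min 1 lw) (min (2*lx/lv) (lv*m/2))"
definition "F t = EE t + eps * P t"
definition "k = eps * m / 3"
definition "Pd t = (\<Sum>i<N. x t i \<bullet> acc t i + v t i \<bullet> v t i)"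

lemma eps_pos: "eps > 0" using lwp lxp lvp m_pos by (simp add: eps_def)
lemma eps_le: "eps \<le> 1" "eps \<le> lw" "eps \<le> 2*lx/lv" "eps \<le> lv*m/2"
  by (auto simp: eps_def)

lemma P_abs: "\<bar>P t\<bar> \<le> (X_of N (x t) + X_of N (v t)) / 2"
proof -
  have "\<bar>P t\<bar> \<le> (\<Sum>i<N. \<bar>x t i \<bullet> v t i\<bar>)" unfolding P_def by (rule sum_abs)
  also have "\<dots> \<le> (\<Sum>i<N. ((norm (x t i))\<^sup>2 + (norm (v t i))\<^sup>2) / 2)"
    by (intro sum_mono abs_inner_le)
  also have "\<dots> = (X_of N (x t) + X_of N (v t)) / 2"
    by (simp add: X_of_def sum.distrib sum_divide_distrib[symmetric])
  finally show ?thesis .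
qed

lemma F_bounds: "EE t / 2 \<le> F t" "F t \<le> 3/2 * EE t"
proof -
  have a: "\<bar>eps * P t\<bar> \<le> eps * ((X_of N (x t) + X_of N (v t)) / 2)"
    using P_abs[of t] eps_pos by (simp add: abs_mult)
  have b: "eps * X_of N (x t) \<le> lw * X_of N (x t)"
    using eps_le(2) X_nonneg by (intro mult_right_mono) auto
  have c: "eps * X_of N (v t) \<le> X_of N (v t)"
    using mult_left_le_one_le[of "X_of N (v t)" eps] eps_le(1) eps_pos X_nonneg[of "v t"] by simp
  have "\<bar>eps * P t\<bar> \<le> EE t / 2"
    using a b c EE_ge[of t] by (simp add: algebra_simps)
  then show "EE t / 2 \<le> F t" "F t \<le> 3/2 * EE t" unfolding F_def by linarith+
qed

lemma dF:
  assumes "t \<ge> 0"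
  shows "(F has_real_derivative -(lv / real N * Ds t) + eps * Pd t) (at t within {0..})"
  unfolding F_def[abs_def] Pd_def
  by (intro DERIV_add DERIV_cmult dEE[OF assms] dP[OF assms])

lemma dF_bound:
  assumes "t \<ge> 0"
  shows "-(lv / real N * Ds t) + eps * Pd t \<le> -(eps * m / 2) * EE t"
proof -
  define V where "V = X_of N (v t)"
  define X where "X = X_of N (x t)"
  define Q where "Q = Qs t"
  define D where "D = Ds t"
  define S where "S = Sterm t"
  define n where "n = real N"
  have np: "n > 0" using Nr by (simp add: n_def)
  have V0: "V \<ge> 0" "X \<ge> 0" "Q \<ge> 0" "D \<ge> 0" using X_nonneg Qs_nonneg Ds_nonneg
    by (auto simp: V_def X_def Q_def D_def)
  have h1: "eps * Pd t \<le> eps * V - eps * (lx / (4 * n)) * Q + eps * (lv\<^sup>2 / (4 * lx * n)) * D - eps * lw * X"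
  proof -
    have "eps * Pd t \<le> eps * (V - lx / (4 * n) * Q + lv\<^sup>2 / (4 * lx * n) * D - lw * X)"
      using dP_bound[OF assms] eps_pos
      by (intro mult_left_mono) (auto simp: V_def X_def Q_def D_def n_def Pd_def)
    then show ?thesis by (simp add: algebra_simps)
  qed
  have h2: "eps * (lv\<^sup>2 / (4 * lx * n)) * D \<le> lv / (2 * n) * D"
  proof (rule mult_right_mono[OF _ V0(4)])
    have "eps * (lv\<^sup>2 / (4 * lx * n)) \<le> (2*lx/lv) * (lv\<^sup>2 / (4 * lx * n))"
      using eps_le(3) lxp lvp np by (intro mult_right_mono) auto
    also have "\<dots> = lv / (2 * n)" using lxp lvp np by (simp add: field_simps power2_eq_square)
    finally show "eps * (lv\<^sup>2 / (4 * lx * n)) \<le> lv / (2 * n)" .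
  qed
  have h3: "lv * m * V \<le> lv / (2 * n) * D"
  proof -
    have "2 * n * m * V \<le> D" using Ds_lower[OF assms] by (simp add: V_def D_def n_def)
    then have "lv / (2 * n) * (2 * n * m * V) \<le> lv / (2 * n) * D"
      using lvp np by (intro mult_left_mono) auto
    then show ?thesis using np by (simp add: field_simps)
  qed
  have h4: "eps * V \<le> lv * m / 2 * V" using eps_le(4) V0(1) by (intro mult_right_mono) auto
  have h5: "eps * m / 2 * S \<le> eps * (lx / (4 * n)) * Q"
  proof -
    have "S \<le> lx / (2 * n * m) * Q" using Sterm_upper[OF assms] by (simp add: S_def Q_def n_def)
    then have "eps * m / 2 * S \<le> eps * m / 2 * (lx / (2 * n * m) * Q)"
      using eps_pos m_pos by (intro mult_left_mono) auto
    also have "\<dots> = eps * (lx / (4 * n)) * Q" using m_pos np by (simp add: field_simps)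
    finally show ?thesis .
  qed
  have h6: "eps * m / 2 * V \<le> lv * m / 2 * V"
  proof -
    have "eps \<le> lv" using mult_left_le[OF m_le1, of lv] lvp eps_le(4) m_pos by linarith
    then show ?thesis using m_pos V0(1) by (intro mult_right_mono) auto
  qed
  have h7: "eps * m / 2 * (lw * X) \<le> eps * lw * X"
  proof -
    have "eps * m / 2 \<le> eps" using mult_left_le[OF m_le1, of eps] eps_pos by linarith
    then have "eps * m / 2 * (lw * X) \<le> eps * (lw * X)"
      using lwp V0(2) by (intro mult_right_mono) auto
    then show ?thesis by (simp add: mult.assoc)
  qed
  have E: "EE t = lw * X + V + S" using EE_eq by (simp add: X_def V_def S_def)
  have L: "lv / real N * Ds t = 2 * (lv / (2 * n) * D)" using np by (simp add: n_def D_def field_simps)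
  have R: "(eps * m / 2) * EE t = eps * m / 2 * (lw * X) + eps * m / 2 * V + eps * m / 2 * S"
    unfolding E by (simp add: algebra_simps)
  have g4: "2 * (eps * V) \<le> lv * m * V" using h4 by (simp add: field_simps)
  have g6: "2 * (eps * m / 2 * V) \<le> lv * m * V" using h6 by (simp add: field_simps)
  have fin: "\<And>P a q1 d2 xw d3 b s4 v4 x4 L R :: real.
     P \<le> a - q1 + d2 - xw \<Longrightarrow> d2 \<le> d3 \<Longrightarrow> b \<le> d3 \<Longrightarrow> 2 * a \<le> b \<Longrightarrow> s4 \<le> q1
     \<Longrightarrow> 2 * v4 \<le> b \<Longrightarrow> x4 \<le> xw \<Longrightarrow> L = 2 * d3 \<Longrightarrow> R = x4 + v4 + s4 \<Longrightarrow> - L + P \<le> - R"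
    by linarith
  have "- (lv / real N * Ds t) + eps * Pd t \<le> - ((eps * m / 2) * EE t)"
    by (rule fin[OF h1 h2 h3 g4 h5 g6 h7 L R])
  then show ?thesis by simp
qed

lemma gron:
  assumes "t \<ge> 0"
  shows "F t * exp (k * t) \<le> F 0"
proof -
  have dg: "((\<lambda>s. F s * exp (k * s)) has_real_derivative
        (-(lv / real N * Ds s) + eps * Pd s) * exp (k * s) + exp (k * s) * (k * 1) * F s) (at s within {0..})"
    if s: "s \<ge> 0" for s
  proof -
    have de: "((\<lambda>s. exp (k * s)) has_real_derivative exp (k * s) * (k * 1)) (at s within {0..})"
      by (rule DERIV_chain2[OF DERIV_exp DERIV_cmult[OF DERIV_ident]])
    show ?thesis by (rule DERIV_mult[OF dF[OF s] de])
  qed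
  have ng: "(-(lv / real N * Ds s) + eps * Pd s) * exp (k * s) + exp (k * s) * (k * 1) * F s \<le> 0"
    if s: "s \<ge> 0" for s
  proof -
    have "k * F s \<le> eps * m / 2 * EE s"
    proof -
      have "k * F s \<le> k * (3/2 * EE s)" using F_bounds(2)[of s] eps_pos m_pos
        by (intro mult_left_mono) (auto simp: k_def)
      then show ?thesis by (simp add: k_def)
    qed
    then have "(-(lv / real N * Ds s) + eps * Pd s) + k * F s \<le> 0"
      using dF_bound[OF s] by simp
    then have "((-(lv / real N * Ds s) + eps * Pd s) + k * F s) * exp (k * s) \<le> 0"
      by (simp add: mult_nonpos_nonneg)
    then show ?thesis by (simp add: algebra_simps)
  qed
  show ?thesis
    using antimono_within[where f = "\<lambda>s. F s * exp (k * s)", OF dg ng, of 0 t] assms by simp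
qed

lemma EE_decay:
  assumes "t \<ge> 0"
  shows "EE t \<le> 2 * F 0 * exp (- (k * t))"
proof -
  have "F t \<le> F 0 * exp (- (k * t))"
    using gron[OF assms] by (simp add: exp_minus field_simps)
  then show ?thesis using F_bounds(1)[of t] by simp
qed

lemma EE_nonneg: "EE t \<ge> 0"
proof -
  have "lw * X_of N (x t) \<ge> 0" using X_nonneg[of "x t"] lwp by simp
  then show ?thesis using EE_ge[of t] X_nonneg[of "v t"] by linarith
qed

lemma k_pos: "k > 0" using eps_pos m_pos by (simp add: k_def)

lemma main: "((\<lambda>t. herding_energy lw lx \<gamma> N (x t) (v t)) \<longlongrightarrow> 0) at_top"
proof (rule tendsto_sandwich[of "\<lambda>_. 0" _ _ "\<lambda>t. 2 * F 0 * exp (- (k * t))"])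
  show "\<forall>\<^sub>F t in at_top. 0 \<le> herding_energy lw lx \<gamma> N (x t) (v t)"
    using EE_nonneg by (simp add: EE_def)
  show "\<forall>\<^sub>F t in at_top. herding_energy lw lx \<gamma> N (x t) (v t) \<le> 2 * F 0 * exp (- (k * t))"
    using eventually_ge_at_top[of "0::real"] by eventually_elim (use EE_decay in \<open>auto simp: EE_def\<close>)
  show "((\<lambda>_. 0) \<longlongrightarrow> (0::real)) at_top" by simp
  have "filterlim (\<lambda>t. k * t) at_top at_top"
    by (rule filterlim_tendsto_pos_mult_at_top[OF tendsto_const k_pos filterlim_ident])
  then have "filterlim (\<lambda>t. - (k * t)) at_bot at_top" by (simp add: filterlim_uminus_at_top)
  then have "((\<lambda>t. exp (- (k * t))) \<longlongrightarrow> 0) at_top" by (rule filterlim_compose[OF exp_at_bot])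
  then show "((\<lambda>t. 2 * F 0 * exp (- (k * t))) \<longlongrightarrow> 0) at_top"
    by (rule tendsto_mult_right_zero)
qed

end

theorem theorem3p6:
  fixes N :: nat and \<gamma> lx lv lw :: real
    and x v :: "real \<Rightarrow> nat \<Rightarrow> real^'m"
  assumes "N \<ge> 1" and "\<gamma> > 0" and "lx > 0" and "lv > 0" and "lw > 0"
    and dx: "\<And>t i. t \<ge> 0 \<Longrightarrow> i < N \<Longrightarrow>
              ((\<lambda>s. x s i) has_vector_derivative v t i) (at t within {0..})"
    and dv: "\<And>t i. t \<ge> 0 \<Longrightarrow> i < N \<Longrightarrow>
              ((\<lambda>s. v s i) has_vector_derivative
                 ((lx / real N) *\<^sub>R (\<Sum>j<N. phi_hat \<gamma> (x t i) (x t j) *\<^sub>R (x t j - x t i))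
                + (lv / real N) *\<^sub>R (\<Sum>j<N. phi_hat \<gamma> (x t i) (x t j) *\<^sub>R (v t j - v t i))
                - lw *\<^sub>R x t i)) (at t within {0..})"
    and "(\<Sum>i<N. x 0 i) = 0" and "(\<Sum>i<N. v 0 i) = 0"
  shows "((\<lambda>t. herding_energy lw lx \<gamma> N (x t) (v t)) \<longlongrightarrow> 0) at_top"
  proof -
  interpret herd N \<gamma> lx lv lw x v
    using assms by unfold_locales auto
  show ?thesis by (rule main)
qed

end
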